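(* Let $V$ be a nonempty set, $E\subset V\times V$, $W\subset V$, and let $B,C\subset V$ satisfy $B\cap C=\emptyset$, $B\cap W=\emptyset$, $C\cap W=\emptyset$. The following are equivalent: (1) for every $b\in B$ and $c\in C$, $\operatorname{cl}_W(R_Wb)\cap\operatorname{cl}_W(R_Wc)=\emptyset$ (i.e. $b$ and $c$ are t-separated w.r.t. $W$); (2) there exist $W_B,W_C\subset V$ with $W_B\cap W_C=\emptyset$, $W_B\cup W_C=W$, and $\operatorname{cl}_W(B\cup W_B)\cap\operatorname{cl}_W(C\cup W_C)=\emptyset$.
   Context: Relations on $V$: $x\,R\,y$ means $(x,y)\in R$; composition $RR'$: $x(RR')y$ iff there is $z$ with $xRz$ and $zR'y$; $R^{-1}$ is the converse; $R^0=\Delta$, $R^{n+1}=RR^n$, $R^+=\bigcup_{k\ge1}R^k$, $R^*=\bigcup_{k\ge0}R^k$. For $S\subset V$, $\Delta_S=\{(x,x):x\in S\}$, $\Delta=\Delta_V$; foreset $RS=\{x:\exists s\in S,\ xRs\}$, $Rc=R\{c\}$. For any relation $F$, $\mathcal T_F=\{O\subset V: OF\subset O\}$ is a topology on $V$. With $W^c=V\setminus W$: $E_W=\Delta_{W^c}E$; $B_W=E(E_W)^*$; $B_W^-=(B_W)^{-1}=(E_W^{-1})^*E^{-1}$; $K_W=B_W^-\Delta_{W^c}B_W$; $C_W=(\Delta_WK_W\Delta_W)^+\cup\Delta_W$; $R_W=\Delta\cup C_W(B_W^-\cup K_W^{-1})$. For $S\subset V$, $\operatorname{cl}_W(S)$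 is the topological closure of $S$ in the topology $\mathcal T_{E_W}$. *)

theory Defs
  imports "HOL-Analysis.Analysis"
begin

text \<open>Relations on a carrier V are sets of pairs; composition R R' is relcomp (O),
  converse is converse, \<Delta>_S is Id_on S, and R^* = \<Delta>_V \<union> R^+ (R^0 = \<Delta>_V).\<close>

definition rstar :: "'a set \<Rightarrow> ('a \<times> 'a) set \<Rightarrow> ('a \<times> 'a) set" where
  "rstar V R = Id_on V \<union> trancl R"

definition foreset :: "('a \<times> 'a) set \<Rightarrow> 'a set \<Rightarrow> 'a set" where
  "foreset R S = {x. \<exists>s\<in>S. (x, s) \<in> R}"

definition rel_topology :: "'a set \<Rightarrow> ('a \<times> 'a) set \<Rightarrow> 'a topology" where
  "rel_topology V F = topology (\<lambda>U. U \<subseteq> V \<and> F `` U \<subseteq> U)"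

definition EW :: "'a set \<Rightarrow> ('a \<times> 'a) set \<Rightarrow> 'a set \<Rightarrow> ('a \<times> 'a) set" where
  "EW V E W = Id_on (V - W) O E"

definition BW :: "'a set \<Rightarrow> ('a \<times> 'a) set \<Rightarrow> 'a set \<Rightarrow> ('a \<times> 'a) set" where
  "BW V E W = E O rstar V (EW V E W)"

definition BWm :: "'a set \<Rightarrow> ('a \<times> 'a) set \<Rightarrow> 'a set \<Rightarrow> ('a \<times> 'a) set" where
  "BWm V E W = converse (BW V E W)"

definition KW :: "'a set \<Rightarrow> ('a \<times> 'a) set \<Rightarrow> 'a set \<Rightarrow> ('a \<times> 'a) set" where
  "KW V E W = BWm V E W O Id_on (V - W) O BW V E W"

definition CW :: "'a set \<Rightarrow> ('a \<times> 'a) set \<Rightarrow> 'a set \<Rightarrow> ('a \<times> 'a) set" where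
  "CW V E W = trancl (Id_on W O KW V E W O Id_on W) \<union> Id_on W"

definition RW :: "'a set \<Rightarrow> ('a \<times> 'a) set \<Rightarrow> 'a set \<Rightarrow> ('a \<times> 'a) set" where
  "RW V E W = Id_on V \<union> CW V E W O (BWm V E W \<union> converse (KW V E W))"

definition clW :: "'a set \<Rightarrow> ('a \<times> 'a) set \<Rightarrow> 'a set \<Rightarrow> 'a set \<Rightarrow> 'a set" where
  "clW V E W S = (rel_topology V (EW V E W)) closure_of S"

end

theory Submission
  imports Defs
begin

lemma F_V: "E \<subseteq> V \<times> V \<Longrightarrow> (x,y) \<in> (EW V E W)\<^sup>* \<Longrightarrow> x \<in> V \<Longrightarrow> y \<in> V"
  by (erule rtrancl_induct) (auto simp: EW_def)

lemma clW_char: assumes EV: "E \<subseteq> V \<times> V"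
  shows "clW V E W S = {x\<in>V. \<exists>s\<in>S. (x,s) \<in> (EW V E W)\<^sup>*}"
proof -
  let ?F = "EW V E W"
  have ist: "istopology (\<lambda>U. U \<subseteq> V \<and> ?F `` U \<subseteq> U)"
    unfolding istopology_def by blast
  have op: "openin (rel_topology V ?F) U \<longleftrightarrow> U \<subseteq> V \<and> ?F `` U \<subseteq> U" for U
    unfolding rel_topology_def using ist by simp
  have ts: "topspace (rel_topology V ?F) = V"
    unfolding topspace_def using op EV by (auto simp: EW_def)
  show ?thesis
  proof (rule set_eqI, rule iffI)
    fix x assume "x \<in> clW V E W S"
    then have x: "x \<in> V" and H: "\<forall>T. x \<in> T \<and> openin (rel_topology V ?F) T \<longrightarrow> (\<exists>y\<in>S. y\<in>T)"
      by (auto simp: clW_def closure_of_def ts)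
    have "openin (rel_topology V ?F) (?F\<^sup>* `` {x})"
      unfolding op using x F_V[OF EV, of x _ W] by (auto intro: rtrancl_into_rtrancl)
    with H x show "x \<in> {x\<in>V. \<exists>s\<in>S. (x,s) \<in> ?F\<^sup>*}" by auto
  next
    fix x assume "x \<in> {x\<in>V. \<exists>s\<in>S. (x,s) \<in> ?F\<^sup>*}"
    then obtain s where x: "x \<in> V" and s: "s \<in> S" "(x,s) \<in> ?F\<^sup>*" by auto
    have "s \<in> T" if "x \<in> T" "openin (rel_topology V ?F) T" for T
      using s(2) that by (induction rule: rtrancl_induct) (auto simp: op)
    then show "x \<in> clW V E W S" using x s(1)
      by (auto simp: clW_def closure_of_def ts)
  qed
qed

lemma EW_iff: "(x,y) \<in> EW V E W \<longleftrightarrow> x \<in> V \<and> x \<notin> W \<and> (x,y) \<in> E"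
  by (auto simp: EW_def)

lemma BW_iff: assumes "E \<subseteq> V \<times> V"
  shows "(x,y) \<in> BW V E W \<longleftrightarrow> (\<exists>z. (x,z)\<in>E \<and> (z,y) \<in> (EW V E W)\<^sup>*)"
  using assms by (auto simp: BW_def rstar_def rtrancl_eq_or_trancl)

lemma KW_iff: "(x,y) \<in> KW V E W \<longleftrightarrow> (\<exists>z. z\<in>V \<and> z\<notin>W \<and> (z,x)\<in>BW V E W \<and> (z,y)\<in>BW V E W)"
  by (auto simp: KW_def BWm_def)

lemma RW_iff: "x \<in> foreset (RW V E W) {b} \<longleftrightarrow> (x = b \<and> b \<in> V) \<or>
   (\<exists>w. (x,w) \<in> CW V E W \<and> ((b,w) \<in> BW V E W \<or> (b,w) \<in> KW V E W))"
  by (auto simp: foreset_def RW_def BWm_def)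

lemma CW_iff: "(x,w) \<in> CW V E W \<longleftrightarrow> (x,w) \<in> (Id_on W O KW V E W O Id_on W)\<^sup>+ \<or> (x = w \<and> w \<in> W)"
  by (auto simp: CW_def)

lemma CW_W: "(x,w) \<in> CW V E W \<Longrightarrow> x \<in> W \<and> w \<in> W"
proof -
  have S: "Id_on W O KW V E W O Id_on W \<subseteq> W \<times> W" by auto
  show "(x,w) \<in> CW V E W \<Longrightarrow> x \<in> W \<and> w \<in> W"
    unfolding CW_iff using trancl_subset_Sigma[OF S] by blast
qed


lemma BW_F: assumes EV: "E \<subseteq> V \<times> V" and "(z,y) \<in> BW V E W" "z \<in> V" "z \<notin> W"
  shows "(z,y) \<in> (EW V E W)\<^sup>*"
proof -
  obtain u where "(z,u) \<in> E" "(u,y) \<in> (EW V E W)\<^sup>*" using assms BW_iff[OF EV] by blast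
  then have "(z,u) \<in> EW V E W" using assms by (auto simp: EW_iff)
  then show ?thesis using \<open>(u,y) \<in> _\<close> by (rule converse_rtrancl_into_rtrancl)
qed

lemma F_BW: assumes EV: "E \<subseteq> V \<times> V" and "(x,y) \<in> (EW V E W)\<^sup>*" "x \<noteq> y"
  shows "(x,y) \<in> BW V E W \<and> x \<notin> W \<and> x \<in> V"
proof -
  from assms(2,3) obtain u where "(x,u) \<in> EW V E W" "(u,y) \<in> (EW V E W)\<^sup>*"
    by (metis converse_rtranclE)
  then show ?thesis using BW_iff[OF EV] by (auto simp: EW_iff)
qed

lemma W_F: "(w,r) \<in> (EW V E W)\<^sup>* \<Longrightarrow> w \<in> W \<Longrightarrow> r = w"
  by (erule converse_rtranclE) (auto simp: EW_iff)

lemma R_sub: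
  assumes EV: "E \<subseteq> V \<times> V" and BW0: "B \<inter> W = {}" and BV: "B \<subseteq> V" and U: "WB \<union> WC = W"
    and D: "clW V E W (B \<union> WB) \<inter> clW V E W (C \<union> WC) = {}" and b: "b \<in> B"
  shows "foreset (RW V E W) {b} \<subseteq> B \<union> WB"
proof
  note cl = clW_char[OF EV]
  have bV: "b \<in> V" "b \<notin> W" using b BV BW0 by auto
  have i: "w \<in> WB" if "w \<in> W" "(b,w) \<in> BW V E W" for w
  proof (rule ccontr)
    assume "w \<notin> WB" then have "w \<in> WC" using U that by auto
    moreover have "(b,w) \<in> (EW V E W)\<^sup>*" using BW_F[OF EV that(2) bV] .
    ultimately have "b \<in> clW V E W (C \<union> WC)" using bV unfolding cl by auto
    moreover have "b \<in> clW V E W (B \<union> WB)" using bV b unfolding cl by auto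
    ultimately show False using D by auto
  qed
  have ii: False if H: "u \<in> B \<union> WB" "v \<in> WC" "(u,v) \<in> KW V E W" for u v
  proof -
    obtain z where z: "z \<in> V" "z \<notin> W" "(z,u) \<in> BW V E W" "(z,v) \<in> BW V E W"
      using H(3) unfolding KW_iff by blast
    have "z \<in> clW V E W (B \<union> WB)" using z BW_F[OF EV z(3) z(1,2)] that(1) unfolding cl by auto
    moreover have "z \<in> clW V E W (C \<union> WC)" using z BW_F[OF EV z(4) z(1,2)] that(2) unfolding cl by auto
    ultimately show False using D by auto
  qed
  have KWs: "(u,v) \<in> KW V E W \<Longrightarrow> (v,u) \<in> KW V E W" for u v unfolding KW_iff by blast
  fix x assume "x \<in> foreset (RW V E W) {b}"
  then consider "x = b" | w where "(x,w) \<in> CW V E W" "(b,w) \<in> BW V E W \<or> (b,w) \<in> KW V E W"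
    unfolding RW_iff by blast
  then show "x \<in> B \<union> WB"
  proof cases
    case 1 then show ?thesis using b by simp
  next
    case 2
    have wW: "w \<in> W" "x \<in> W" using CW_W[OF 2(1)] by auto
    have wB: "w \<in> WB"
    proof (cases "(b,w) \<in> BW V E W")
      case True then show ?thesis using i wW by auto
    next
      case False
      then have "(b,w) \<in> KW V E W" using 2 by auto
      then show ?thesis using ii[of b w] b wW U by auto
    qed
    from 2(1) consider "(x,w) \<in> (Id_on W O KW V E W O Id_on W)\<^sup>+" | "x = w" unfolding CW_iff by blast
    then show ?thesis
    proof cases
      case 1
      then show ?thesis
      proof (induction rule: converse_trancl_induct)
        case (base y)
        then have "(y,w) \<in> KW V E W" "y \<in> W" by auto
        then show ?case using ii[of w y] KWs wB U by auto
      next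
        case (step y z)
        then have "(y,z) \<in> KW V E W" "y \<in> W" by auto
        then show ?case using ii[of z y] KWs step.IH U by auto
      qed
    next
      case 2 then show ?thesis using wB by simp
    qed
  qed
qed

theorem proposition2:
  fixes V :: "'a set" and E :: "('a \<times> 'a) set" and W B C :: "'a set"
  assumes "V \<noteq> {}" and "E \<subseteq> V \<times> V" and "W \<subseteq> V" and "B \<subseteq> V" and "C \<subseteq> V"
    and "B \<inter> C = {}" and "B \<inter> W = {}" and "C \<inter> W = {}"
  shows "(\<forall>b\<in>B. \<forall>c\<in>C. clW V E W (foreset (RW V E W) {b}) \<inter> clW V E W (foreset (RW V E W) {c}) = {})
     \<longleftrightarrow> (\<exists>WB WC. WB \<inter> WC = {} \<and> WB \<union> WC = W \<and>
            clW V E W (B \<union> WB) \<inter> clW V E W (C \<union> WC) = {})"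
proof
  note EV = assms(2)
  note cl = clW_char[OF EV]
  let ?R = "\<lambda>b. foreset (RW V E W) {b}"
  let ?F = "EW V E W"
  assume H: "\<forall>b\<in>B. \<forall>c\<in>C. clW V E W (?R b) \<inter> clW V E W (?R c) = {}"
  define WB where "WB = {w\<in>W. \<exists>b\<in>B. w \<in> ?R b}"
  define WC where "WC = W - WB"
  have "clW V E W (B \<union> WB) \<inter> clW V E W (C \<union> WC) = {}"
  proof (rule ccontr)
    assume "clW V E W (B \<union> WB) \<inter> clW V E W (C \<union> WC) \<noteq> {}"
    then obtain x s t where x: "x \<in> V" and s: "s \<in> B \<union> WB" "(x,s) \<in> ?F\<^sup>*"
      and t: "t \<in> C \<union> WC" "(x,t) \<in> ?F\<^sup>*" unfolding cl by blast
    obtain b0 r where b0: "b0 \<in> B" "r \<in> ?R b0" "(x,r) \<in> ?F\<^sup>*"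
    proof (cases "s \<in> B")
      case True
      then have "s \<in> ?R s" using assms(4) unfolding RW_iff by blast
      then show ?thesis using that True s by blast
    next
      case False
      then show ?thesis using that s WB_def by blast
    qed
    have xR: "x \<in> clW V E W (?R b0)" using x b0 unfolding cl by blast
    show False
    proof (cases "t \<in> C")
      case True
      have "x \<in> clW V E W (?R t)"
      proof -
        have "t \<in> ?R t" using True assms(5) unfolding RW_iff by blast
        then show ?thesis using x t unfolding cl by blast
      qed
      then show False using H b0 True xR by blast
    next
      case False
      then have tW: "t \<in> W" "t \<notin> WB" using t WC_def by auto
      have "t \<in> ?R b0"
      proof (cases "x = t")
        case True
        then have "r = t" using W_F[of t r V E W] b0(3) tW by auto
        then show ?thesis using b0 by simp
      next
        case False
        then have xt: "(x,t) \<in> BW V E W" "x \<notin> W" "x \<in> V" using F_BW[OF EV t(2)] by auto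
        have tCW: "(t,t) \<in> CW V E W" using tW unfolding CW_iff by blast
        show ?thesis
        proof (cases "x = r")
          case True
          have "r = b0 \<or> (\<exists>w. (r,w) \<in> CW V E W)" using b0(2) unfolding RW_iff by blast
          then have rb: "r = b0" using xt(2) True by (auto dest: CW_W)
          have "(b0,t) \<in> BW V E W" using xt(1) True rb by simp
          then show ?thesis using tCW unfolding RW_iff by blast
        next
          case False
          then have xr: "(x,r) \<in> BW V E W" using F_BW[OF EV b0(3)] by auto
          have rt: "(r,t) \<in> KW V E W" "(t,r) \<in> KW V E W" using xr xt unfolding KW_iff by blast+
          from b0(2) consider "r = b0" | w where "(r,w) \<in> CW V E W" "(b0,w) \<in> BW V E W \<or> (b0,w) \<in> KW V E W"
            unfolding RW_iff by blast
          then show ?thesis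
          proof cases
            case 1
            then have "(b0,t) \<in> KW V E W" using rt by simp
            then show ?thesis using tCW unfolding RW_iff by blast
          next
            case 2
            have rW: "r \<in> W" using CW_W[OF 2(1)] by simp
            have st: "(t,r) \<in> Id_on W O KW V E W O Id_on W" using rt rW tW by auto
            have "(t,w) \<in> CW V E W"
              using 2(1) st unfolding CW_iff by (auto intro: trancl_into_trancl2)
            then show ?thesis using 2(2) unfolding RW_iff by blast
          qed
        qed
      qed
      then show False using tW b0(1) WB_def by auto
    qed
  qed
  moreover have "WB \<inter> WC = {}" "WB \<union> WC = W" using WB_def WC_def by auto
  ultimately show "\<exists>WB WC. WB \<inter> WC = {} \<and> WB \<union> WC = W \<and>
            clW V E W (B \<union> WB) \<inter> clW V E W (C \<union> WC) = {}" by blast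
next
  note EV = assms(2)
  note cl = clW_char[OF EV]
  assume "\<exists>WB WC. WB \<inter> WC = {} \<and> WB \<union> WC = W \<and>
            clW V E W (B \<union> WB) \<inter> clW V E W (C \<union> WC) = {}"
  then obtain WB WC where U: "WB \<union> WC = W" and D: "clW V E W (B \<union> WB) \<inter> clW V E W (C \<union> WC) = {}"
    by blast
  have mono: "clW V E W S \<subseteq> clW V E W T" if "S \<subseteq> T" for S T using that unfolding cl by blast
  show "\<forall>b\<in>B. \<forall>c\<in>C. clW V E W (foreset (RW V E W) {b}) \<inter> clW V E W (foreset (RW V E W) {c}) = {}"
  proof (intro ballI)
    fix b c assume b: "b \<in> B" and c: "c \<in> C"
    have 1: "clW V E W (foreset (RW V E W) {b}) \<subseteq> clW V E W (B \<union> WB)"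
      by (rule mono, rule R_sub[OF EV assms(7) assms(4) U D b])
    have D': "clW V E W (C \<union> WC) \<inter> clW V E W (B \<union> WB) = {}" using D by blast
    have U': "WC \<union> WB = W" using U by blast
    have 2: "clW V E W (foreset (RW V E W) {c}) \<subseteq> clW V E W (C \<union> WC)"
      by (rule mono, rule R_sub[OF EV assms(8) assms(5) U' D' c])
    show "clW V E W (foreset (RW V E W) {b}) \<inter> clW V E W (foreset (RW V E W) {c}) = {}"
      using 1 2 D by blast
  qed
qed

end
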